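(* For all positive integers $n$ and non-negative integers $k$, $$\det_{0\le i,j\le n-1}\Big(\frac{2k+2}{i+j+k+1}\binom{2i+2j-1}{i+j+k}\Big)= \begin{cases} (-1)^{n_1\binom{k+1}2+1}(n_1-1), & n=(k+1)n_1,\\ (-1)^{n_1\binom{k+1}2+k+1}n_1, & n=(k+1)n_1+1,\\ 0, & n\not\equiv0,1\pmod{k+1}, \end{cases}$$ where the $(0,0)$-entry of the matrix is defined to be $0$, and $n_1$ is a non-negative integer (for $k=0$, the first case is meant).
   Context: Binomial coefficients $\binom ab$ with $a\ge0$ are $0$ if $b<0$ or $b>a$. *)

theory Defs
  imports "Jordan_Normal_Form.Determinant"
begin

text \<open>Entry (i,j) of the matrix: (2k+2)/(i+j+k+1) * binom(2i+2j-1, i+j+k),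
  with the (0,0)-entry defined to be 0. For i+j >= 1 the upper index 2i+2j-1 is a
  non-negative integer, so the natural-number binomial coefficient is the intended one.\<close>
definition thm19_entry :: "nat \<Rightarrow> nat \<Rightarrow> nat \<Rightarrow> rat" where
  "thm19_entry k i j =
     (if i = 0 \<and> j = 0 then 0
      else of_nat (2 * k + 2) / of_nat (i + j + k + 1) * of_nat ((2 * i + 2 * j - 1) choose (i + j + k)))"

end

theory Submission
  imports Defs
begin


fun Gp :: "nat \<Rightarrow> nat \<Rightarrow> nat \<Rightarrow> int" where
  "Gp k 0 t = (if t = k then 1 else 0)"
| "Gp k (Suc j) t = (if t = 0 then 0 else Gp k j (t - 1)) + 2 * Gp k j t + Gp k j (Suc t)"

definition bn :: "nat \<Rightarrow> int \<Rightarrow> int" where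
  "bn N x = (if x < 0 then 0 else int (N choose nat x))"

lemma bn_pascal: "bn (Suc N) x = bn N (x - 1) + bn N x"
proof (cases "x < 0")
  case True thus ?thesis by (simp add: bn_def)
next
  case False
  show ?thesis
  proof (cases "x = 0")
    case True thus ?thesis by (simp add: bn_def)
  next
    case False
    with \<open>\<not> x < 0\<close> have "nat x = Suc (nat (x - 1))" by simp
    thus ?thesis using \<open>\<not> x < 0\<close> False by (simp add: bn_def)
  qed
qed

lemma bn_pascal2: "bn (Suc (Suc N)) x = bn N (x - 2) + 2 * bn N (x - 1) + bn N x"
  by (simp add: bn_pascal algebra_simps)

lemma bn_sym: "bn N x = bn N (int N - x)"
proof -
  consider "x < 0" | "x > int N" | "0 \<le> x \<and> x \<le> int N" by linarith
  thus ?thesis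
  proof cases
    case 1 thus ?thesis by (simp add: bn_def binomial_eq_0)
  next
    case 2 thus ?thesis by (simp add: bn_def binomial_eq_0 nat_less_iff)
  next
    case 3
    hence "nat (int N - x) = N - nat x" by auto
    thus ?thesis using 3 by (simp add: bn_def binomial_symmetric[symmetric] nat_le_iff)
  qed
qed

lemma Gp_closed: "Gp k j t = bn (2*j) (int j + int t - int k) - bn (2*j) (int j + int t + int k + 2)"
proof (induction j arbitrary: t)
  case 0
  show ?case by (cases "t = k") (auto simp: bn_def binomial_eq_0 zero_less_nat_eq)
next
  case (Suc j)
  have e: "2 * Suc j = Suc (Suc (2*j))" by simp
  have z: "bn (2*j) (int j - 1 - int k) - bn (2*j) (int j + int k + 1) = 0"
    using bn_sym[of "2*j" "int j - 1 - int k"] by (simp add: algebra_simps)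
  show ?case
  proof (cases "t = 0")
    case True
    show ?thesis unfolding Gp.simps Suc.IH e bn_pascal2 using True z
      by (simp add: algebra_simps)
  next
    case False
    hence t: "int (t - 1) = int t - 1" by simp
    show ?thesis unfolding Gp.simps Suc.IH e bn_pascal2 using False
      by (simp add: t algebra_simps)
  qed
qed

lemma Gp_zero_above: "t > k + j \<Longrightarrow> Gp k j t = 0"
  by (simp add: Gp_closed bn_def binomial_eq_0 nat_less_iff)

lemma Gp_zero_src: "k > t + j \<Longrightarrow> Gp k j t = 0"
  by (simp add: Gp_closed bn_def binomial_eq_0 nat_less_iff)

lemma Gp_diag: "Gp j j 0 = 1"
  by (simp add: Gp_closed bn_def binomial_eq_0 nat_less_iff)

lemma Gp_comp: "N > s + a \<Longrightarrow> (\<Sum>r<N. Gp r a s * Gp k b r) = Gp k (a+b) s"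
proof (induction a arbitrary: s)
  case 0
  have "(\<Sum>r<N. Gp r 0 s * Gp k b r) = (\<Sum>r<N. if r = s then Gp k b r else 0)"
    by (rule sum.cong) auto
  also have "\<dots> = Gp k b s" using 0 by (simp add: sum.delta')
  finally show ?case by simp
next
  case (Suc a)
  have h1: "(\<Sum>r<N. (if s = 0 then 0 else Gp r a (s - 1)) * Gp k b r) =
     (if s = 0 then 0 else Gp k (a+b) (s-1))"
    using Suc by (cases "s = 0") auto
  have h2: "(\<Sum>r<N. Gp r a s * Gp k b r) = Gp k (a+b) s" using Suc by auto
  have h3: "(\<Sum>r<N. Gp r a (Suc s) * Gp k b r) = Gp k (a+b) (Suc s)" using Suc by auto
  have "(\<Sum>r<N. Gp r (Suc a) s * Gp k b r) =
     (\<Sum>r<N. (if s = 0 then 0 else Gp r a (s - 1)) * Gp k b r) + 2 * (\<Sum>r<N. Gp r a s * Gp k b r)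
     + (\<Sum>r<N. Gp r a (Suc s) * Gp k b r)"
    by (simp add: algebra_simps sum.distrib sum_distrib_left)
  also have "\<dots> = Gp k (Suc a + b) s" unfolding h1 h2 h3 by simp
  finally show ?case .
qed

lemma Gp_alt0: "N > k \<Longrightarrow> (\<Sum>t<N. (-1)^t * Gp k 0 t) = (-1)^k"
proof -
  assume "N > k"
  have "(\<Sum>t<N. (-1)^t * Gp k 0 t) = (\<Sum>t<N. if t = k then (-1)^k else 0)"
    by (rule sum.cong) auto
  thus ?thesis using \<open>N > k\<close> by (simp add: sum.delta')
qed

lemma Gp_alt: assumes "N > k + Suc j" shows "(\<Sum>t<N. (-1)^t * Gp k (Suc j) t) = Gp k j 0"
proof -
  obtain M where N: "N = Suc M" using assms by (cases N) auto
  define g where "g = Gp k j"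
  have gM: "g M = 0" "g (Suc M) = 0" using assms N by (auto simp: g_def intro!: Gp_zero_above)
  define A where "A = (\<Sum>t<M. (-1)^t * g t)"
  have gs: "Gp k (Suc j) t = (if t = 0 then 0 else g (t - 1)) + 2 * g t + g (Suc t)" for t
    by (simp add: g_def)
  have s1: "(\<Sum>t<Suc M. (-1)^t * g t) = A" by (simp add: A_def gM)
  have s2: "(\<Sum>t<Suc M. (-1)^t * (if t = 0 then 0 else g (t - 1))) = - A"
    unfolding sum.lessThan_Suc_shift by (simp add: A_def sum_negf)
  have s3: "(\<Sum>t<Suc M. (-1)^t * g (Suc t)) = g 0 - A"
  proof -
    have "(\<Sum>t<Suc (Suc M). (-1)^t * g t) = g 0 + (\<Sum>t<Suc M. (-1)^(Suc t) * g (Suc t))"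
      unfolding sum.lessThan_Suc_shift by simp
    moreover have "(\<Sum>t<Suc (Suc M). (-1)^t * g t) = A" using s1 gM by simp
    ultimately show ?thesis by (simp add: sum_negf)
  qed
  have "(\<Sum>t<N. (-1)^t * Gp k (Suc j) t) = (\<Sum>t<Suc M. (-1)^t * (if t = 0 then 0 else g (t - 1)))
     + 2 * (\<Sum>t<Suc M. (-1)^t * g t) + (\<Sum>t<Suc M. (-1)^t * g (Suc t))"
    unfolding N gs by (simp add: algebra_simps sum.distrib sum_distrib_left)
  also have "\<dots> = g 0" unfolding s1 s2 s3 by simp
  finally show ?thesis by (simp add: g_def)
qed


lemma key_main:
  fixes k a :: nat
  shows "(2*k+2) * ((2*k+2*a+5) choose (2*k+a+3)) + (2*k+a+4) * ((2*k+2*a+4) choose (2*k+a+4))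
    = (2*k+a+4) * ((2*k+2*a+4) choose (a+2))"
proof -
  define N where "N = 2*k+2*a+4"
  define X1 where "X1 = (N+1) choose (2*k+a+3)"
  define X2 where "X2 = N choose (2*k+a+4)"
  define X3 where "X3 = N choose (a+2)"
  have h1: "fact (2*k+a+3) * fact (a+2) * X1 = fact (N+1)"
  proof -
    have eq: "N + 1 - (2*k+a+3) = a+2" by (simp add: N_def)
    have le: "2*k+a+3 \<le> N+1" by (simp add: N_def)
    show ?thesis using binomial_fact_lemma[OF le] unfolding eq X1_def .
  qed
  have h2: "fact (2*k+a+4) * fact a * X2 = fact N"
  proof -
    have eq: "N - (2*k+a+4) = a" by (simp add: N_def)
    have le: "2*k+a+4 \<le> N" by (simp add: N_def)
    show ?thesis using binomial_fact_lemma[OF le] unfolding eq X2_def .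
  qed
  have h3: "fact (a+2) * fact (2*k+a+2) * X3 = fact N"
  proof -
    have eq: "N - (a+2) = 2*k+a+2" by (simp add: N_def)
    have le: "a+2 \<le> N" by (simp add: N_def)
    show ?thesis using binomial_fact_lemma[OF le] unfolding eq X3_def .
  qed
  define F where "F = (fact (2*k+a+2) :: nat)"
  define Fa where "Fa = (fact a :: nat)"
  have f3: "fact (2*k+a+3) = (2*k+a+3) * F"
  proof -
    have "2*k+a+3 = Suc (2*k+a+2)" by simp
    thus ?thesis unfolding F_def by (simp only: fact_Suc of_nat_id)
  qed
  have f4: "fact (2*k+a+4) = (2*k+a+4) * ((2*k+a+3) * F)"
  proof -
    have "2*k+a+4 = Suc (2*k+a+3)" by simp
    thus ?thesis using f3 by (simp only: fact_Suc of_nat_id)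
  qed
  have fa: "fact (a+2) = (a+2) * (Suc a * Fa)"
  proof -
    have "a+2 = Suc (Suc a)" by simp
    thus ?thesis unfolding Fa_def by (simp only: fact_Suc of_nat_id)
  qed
  have fN: "fact (N+1) = (N+1) * fact N" by simp
  define D where "D = (fact (2*k+a+4) * fact (a+2) :: nat)"
  have D1: "D * X1 = (2*k+a+4) * ((N+1) * fact N)"
  proof -
    have "D * X1 = (2*k+a+4) * (fact (2*k+a+3) * fact (a+2) * X1)"
      unfolding D_def f4 f3 by (simp only: ac_simps)
    thus ?thesis unfolding h1 fN .
  qed
  have D2: "D * X2 = (a+2) * Suc a * fact N"
  proof -
    have "D * X2 = (a+2) * Suc a * (fact (2*k+a+4) * fact a * X2)"
      unfolding D_def fa Fa_def by (simp only: ac_simps)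
    thus ?thesis unfolding h2 .
  qed
  have D3: "D * X3 = (2*k+a+4) * (2*k+a+3) * fact N"
  proof -
    have "D * X3 = (2*k+a+4) * (2*k+a+3) * (fact (a+2) * fact (2*k+a+2) * X3)"
      unfolding D_def f4 F_def by (simp only: ac_simps)
    thus ?thesis unfolding h3 .
  qed
  have poly: "(2*k+2) * ((2*k+a+4) * (N+1)) + (2*k+a+4) * ((a+2) * Suc a) = (2*k+a+4) * ((2*k+a+4) * (2*k+a+3))"
    by (simp add: N_def algebra_simps)
  have "D * ((2*k+2) * X1 + (2*k+a+4) * X2) = D * ((2*k+a+4) * X3)"
  proof -
    have "D * ((2*k+2) * X1 + (2*k+a+4) * X2) = (2*k+2) * (D * X1) + (2*k+a+4) * (D * X2)"
      by (simp add: algebra_simps)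
    also have "\<dots> = ((2*k+2) * ((2*k+a+4) * (N+1)) + (2*k+a+4) * ((a+2) * Suc a)) * fact N"
      unfolding D1 D2 by (simp add: algebra_simps)
    also have "\<dots> = (2*k+a+4) * (D * X3)" unfolding poly D3 by (simp add: algebra_simps)
    finally show ?thesis by (simp add: algebra_simps)
  qed
  moreover have "D > 0" by (simp add: D_def)
  ultimately have "(2*k+2) * X1 + (2*k+a+4) * X2 = (2*k+a+4) * X3" by simp
  moreover have e5: "2*k+2*a+5 = N+1" and e4: "2*k+2*a+4 = N" by (simp_all add: N_def)
  ultimately show ?thesis unfolding e5 e4 X1_def X2_def X3_def by simp
qed


lemma entry_int: "int (2*k+2) * int ((2*m+1) choose (m+k+1)) = int (m+k+2) * Gp k m 0"
proof (cases "k \<le> m")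
  case False
  thus ?thesis by (simp add: Gp_closed bn_def binomial_eq_0)
next
  case True
  then obtain d where m: "m = k + d" by (metis le_add_diff_inverse)
  have "d = 0 \<or> d = 1 \<or> (\<exists>a. d = a + 2)" by presburger
  then consider "d = 0" | "d = 1" | a where "d = a + 2" by blast
  thus ?thesis
  proof cases
    case 1 thus ?thesis by (simp add: m Gp_closed bn_def binomial_eq_0) (simp add: mult_2[symmetric])
  next
    case 2
    have c: "(2*k+3) choose (2*k+2) = 2*k+3"
      using binomial_symmetric[of 1 "2*k+3"] by simp
    have e: "2*m+1 = 2*k+3" "m+k+1 = 2*k+2" "m+k+2 = 2*k+3" using 2 m by simp_all
    have e2: "int m + int 0 - int k = 1" "nat 1 = 1" using 2 m by simp_all
    have e3: "2 * m choose nat (int m + int 0 + int k + 2) = 0"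
      by (rule binomial_eq_0) (simp add: 2 m)
    have g: "Gp k m 0 = int (2*m)"
      unfolding Gp_closed bn_def e2 e3 by simp
    show ?thesis unfolding e c g using 2 m by simp
  next
    case 3
    have km: "int ((2*k+2) * ((2*k+2*a+5) choose (2*k+a+3)) + (2*k+a+4) * ((2*k+2*a+4) choose (2*k+a+4)))
      = int ((2*k+a+4) * ((2*k+2*a+4) choose (a+2)))" using key_main[of k a] by simp
    have e: "2*m+1 = 2*k+2*a+5" "m+k+1 = 2*k+a+3" "m+k+2 = 2*k+a+4" "2*m = 2*k+2*a+4"
      by (simp_all add: m 3)
    have e2: "int m + int 0 - int k = int (a+2)" "int m + int 0 + int k + 2 = int (2*k+a+4)" by (simp_all add: m 3)
    have g: "Gp k m 0 = int ((2*k+2*a+4) choose (a+2)) - int ((2*k+2*a+4) choose (2*k+a+4))"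
      unfolding Gp_closed bn_def e(4) by (simp only: e2 nat_int) simp
    show ?thesis unfolding e g using km by (simp only: of_nat_add of_nat_mult) (simp add: algebra_simps)
  qed
qed


fun ups :: "nat \<Rightarrow> nat \<Rightarrow> int" where
  "ups i 0 = (if i = 0 then 1 else 0)"
| "ups i (Suc 0) = (if i = 1 then 1 else 0) - (if i = 0 then 2 else 0)"
| "ups i (Suc (Suc j)) = (if i = 0 then 0 else ups (i - 1) (Suc j)) - 2 * ups i (Suc j)
     - (if j = 0 then 2 else 1) * ups i j"

definition tau :: "nat \<Rightarrow> nat \<Rightarrow> nat \<Rightarrow> int" where
  "tau k u t = (if u + k = t \<or> u + t = k then 1 else 0) - (if u = t + k + 2 then 1 else 0)"

lemma ups_upper: "i > j \<Longrightarrow> ups i j = 0"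
  by (induction i j rule: ups.induct) auto

lemma ups_diag: "ups j j = 1"
proof (induction j rule: nat_less_induct)
  case (1 n)
  show ?case
  proof (cases n)
    case 0 thus ?thesis by simp
  next
    case (Suc m)
    show ?thesis
    proof (cases m)
      case 0 thus ?thesis using Suc by simp
    next
      case (Suc m')
      thus ?thesis using \<open>n = Suc m\<close> 1 by (simp add: ups_upper)
    qed
  qed
qed

lemma ups_0: "ups 0 j = (if j = 0 then 1 else 2 * (-1)^j)"
proof (induction j rule: nat_less_induct)
  case (1 n)
  show ?case
  proof (cases n)
    case 0 thus ?thesis by simp
  next
    case (Suc m)
    show ?thesis
    proof (cases m)
      case 0 thus ?thesis using Suc by simp
    next
      case (Suc m')
      have "ups 0 m = 2 * (-1)^m" using 1 Suc \<open>n = Suc m\<close> by simp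
      moreover have "ups 0 m' = (if m' = 0 then 1 else 2 * (-1)^m')" using 1 Suc \<open>n = Suc m\<close> by simp
      ultimately show ?thesis using \<open>n = Suc m\<close> Suc by auto
    qed
  qed
qed

lemma tau_rec0: "tau k (Suc (Suc j)) 0 = tau k (Suc j) 1 - (if j = 0 then 2 else 1) * tau k j 0"
  unfolding tau_def by auto
lemma tau_recS: "tau k (Suc (Suc j)) (Suc s) = tau k (Suc j) s + tau k (Suc j) (Suc (Suc s))
   - (if j = 0 then 2 else 1) * tau k j (Suc s)"
  unfolding tau_def by auto
lemma tau_rec: "tau k (Suc (Suc j)) t = (if t = 0 then 0 else tau k (Suc j) (t - 1)) + tau k (Suc j) (Suc t)
   - (if j = 0 then 2 else 1) * tau k j t"
  by (cases t) (simp_all only: tau_rec0 tau_recS, simp_all)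

lemma Gups: "N > j \<Longrightarrow> (\<Sum>i<N. Gp k i t * ups i j) = tau k j t"
proof (induction j arbitrary: t N rule: nat_less_induct)
  case (1 j)
  show ?case
  proof (cases j)
    case 0
    have "(\<Sum>i<N. Gp k i t * ups i j) = (\<Sum>i<N. if i = 0 then Gp k 0 t else 0)"
      by (rule sum.cong) (auto simp: 0)
    also have "\<dots> = Gp k 0 t" using 1 by (simp add: sum.delta')
    finally show ?thesis by (simp add: 0 tau_def)
  next
    case (Suc j1)
    show ?thesis
    proof (cases j1)
      case 0
      have "(\<Sum>i<N. Gp k i t * ups i j) = (\<Sum>i<N. (if i = 1 then Gp k 1 t else 0) - (if i = 0 then 2 * Gp k 0 t else 0))"
        by (rule sum.cong) (auto simp: 0 Suc)
      also have "\<dots> = Gp k 1 t - 2 * Gp k 0 t" using 1 Suc 0 by (simp add: sum_subtractf sum.delta')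
      finally show ?thesis unfolding Suc 0 by (cases t) (auto simp: tau_def)
    next
      case (Suc j2)
      have j: "j = Suc (Suc j2)" using \<open>j = Suc j1\<close> Suc by simp
      obtain N' where N: "N = Suc N'" using 1 by (cases N) auto
      have IH1: "(\<Sum>i<N'. Gp k i s * ups i (Suc j2)) = tau k (Suc j2) s" for s
        using 1 j N by auto
      have IH1': "(\<Sum>i<N'. ups i (Suc j2) * Gp k i s) = tau k (Suc j2) s" for s
        using IH1[of s] by (simp add: mult.commute)
      have IH2: "(\<Sum>i<N. Gp k i s * ups i (Suc j2)) = tau k (Suc j2) s" for s
        using 1 j by auto
      have IH3: "(\<Sum>i<N. Gp k i s * ups i j2) = tau k j2 s" for s
        using 1 j by auto
      have A: "(\<Sum>i<N. Gp k i t * (if i = 0 then 0 else ups (i - 1) (Suc j2)))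
          = (\<Sum>i<N'. Gp k (Suc i) t * ups i (Suc j2))"
        unfolding N sum.lessThan_Suc_shift by simp
      also have "\<dots> = (\<Sum>i<N'. ((if t = 0 then 0 else Gp k i (t - 1)) + 2 * Gp k i t + Gp k i (Suc t)) * ups i (Suc j2))"
        by simp
      also have "\<dots> = (if t = 0 then 0 else tau k (Suc j2) (t - 1)) + 2 * tau k (Suc j2) t + tau k (Suc j2) (Suc t)"
        by (cases "t = 0") (simp_all add: algebra_simps sum.distrib sum_distrib_left[symmetric] IH1 IH1')
      finally have A': "(\<Sum>i<N. Gp k i t * (if i = 0 then 0 else ups (i - 1) (Suc j2)))
          = (if t = 0 then 0 else tau k (Suc j2) (t - 1)) + 2 * tau k (Suc j2) t + tau k (Suc j2) (Suc t)" .
      have "(\<Sum>i<N. Gp k i t * ups i j) = (\<Sum>i<N. Gp k i t * (if i = 0 then 0 else ups (i - 1) (Suc j2)))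
         - 2 * (\<Sum>i<N. Gp k i t * ups i (Suc j2)) - (if j2 = 0 then 2 else 1) * (\<Sum>i<N. Gp k i t * ups i j2)"
      proof -
        have pt: "Gp k i t * ups i j = Gp k i t * (if i = 0 then 0 else ups (i - 1) (Suc j2))
          - 2 * (Gp k i t * ups i (Suc j2)) - (if j2 = 0 then 2 else 1) * (Gp k i t * ups i j2)" for i
          unfolding j ups.simps(3) by (simp only: algebra_simps)
        show ?thesis unfolding pt by (simp only: sum_subtractf sum_distrib_left[symmetric])
      qed
      also have "\<dots> = tau k j t" unfolding A' IH2 IH3 j tau_rec by simp
      finally show ?thesis .
    qed
  qed
qed


lemma mult_entry:
  assumes "A \<in> carrier_mat n n" "B \<in> carrier_mat n n" "i < n" "j < n"
  shows "(A * B) $$ (i,j) = (\<Sum>c<n. A $$ (i,c) * B $$ (c,j))"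
  using assms by (simp add: scalar_prod_def atLeast0LessThan)

lemma det_upper_one:
  assumes A: "A \<in> carrier_mat n n" and z: "\<And>i j. i < n \<Longrightarrow> j < i \<Longrightarrow> A $$ (i,j) = 0"
    and d: "\<And>i. i < n \<Longrightarrow> A $$ (i,i) = 1"
  shows "det A = 1"
proof -
  have "upper_triangular A" using A z unfolding upper_triangular_def by auto
  hence "det A = prod_list (diag_mat A)" using det_upper_triangular A by blast
  also have "\<dots> = 1" unfolding prod_list_diag_prod using A d by simp
  finally show ?thesis .
qed

lemma det_lower_one:
  assumes A: "A \<in> carrier_mat n n" and z: "\<And>i j. i < j \<Longrightarrow> j < n \<Longrightarrow> A $$ (i,j) = 0"
    and d: "\<And>i. i < n \<Longrightarrow> A $$ (i,i) = 1"
  shows "det A = 1"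
proof -
  have "det A = prod_list (diag_mat A)" using det_lower_triangular[OF z A] by blast
  also have "\<dots> = 1" unfolding prod_list_diag_prod using A d by simp
  finally show ?thesis .
qed

lemma det_zero_row:
  assumes A: "(A :: 'a :: comm_ring_1 mat) \<in> carrier_mat n n" and i: "i < n"
    and z: "\<And>j. j < n \<Longrightarrow> A $$ (i,j) = 0"
  shows "det A = 0"
  using laplace_expansion_row[OF A i] z by simp

lemma det_col_single:
  assumes A: "(A :: 'a :: comm_ring_1 mat) \<in> carrier_mat (Suc m) (Suc m)" and j: "j < Suc m"
    and z: "\<And>i. 0 < i \<Longrightarrow> i < Suc m \<Longrightarrow> A $$ (i,j) = 0"
  shows "det A = A $$ (0,j) * (-1)^j * det (mat m m (\<lambda>(i,l). A $$ (Suc i, if l < j then l else Suc l)))"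
proof -
  have "det A = (\<Sum>i<Suc m. A $$ (i,j) * cofactor A i j)" by (rule laplace_expansion_column[OF A j])
  also have "\<dots> = A $$ (0,j) * cofactor A 0 j"
    by (subst sum.lessThan_Suc_shift) (simp add: z)
  finally have d: "det A = A $$ (0,j) * cofactor A 0 j" .
  have md: "mat_delete A 0 j = mat m m (\<lambda>(i,l). A $$ (Suc i, if l < j then l else Suc l))"
    unfolding mat_delete_def using A by auto
  show ?thesis unfolding d cofactor_def md by simp
qed

lemma det_anti: "det (mat m m (\<lambda>(i,j). if i + j + 1 = m then 1 else 0) :: 'a :: comm_ring_1 mat) = (-1)^(m choose 2)"
proof (induction m)
  case 0 show ?case by (simp add: binomial_eq_0)
next
  case (Suc m)
  let ?A = "mat (Suc m) (Suc m) (\<lambda>(i,j). if i + j + 1 = Suc m then 1 else 0) :: 'a mat"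
  have "det ?A = ?A $$ (0,m) * (-1)^m * det (mat m m (\<lambda>(i,l). ?A $$ (Suc i, if l < m then l else Suc l)))"
    by (rule det_col_single) auto
  also have "mat m m (\<lambda>(i,l). ?A $$ (Suc i, if l < m then l else Suc l)) =
     mat m m (\<lambda>(i,j). if i + j + 1 = m then 1 else 0)"
    by (rule eq_matI) auto
  finally have "det ?A = (-1)^m * (-1)^(m choose 2)" using Suc by simp
  also have "\<dots> = (-1)^(m + (m choose 2))" by (simp only: power_add)
  also have "m + (m choose 2) = Suc m choose 2"
    using binomial_Suc_Suc[of m 1] by (simp add: numeral_2_eq_2)
  finally show ?case .
qed

lemma det_block:
  fixes A :: "'a :: idom mat" and e :: 'a
  assumes A: "A \<in> carrier_mat n n" and pn: "p \<le> n"
    and low: "\<And>r c. p \<le> r \<Longrightarrow> r < n \<Longrightarrow> c < n \<Longrightarrow> A $$ (r,c) = (if c + p = r then e else 0)"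
  shows "det A = (-1)^(p * (n - p)) * e^(n - p) * det (mat p p (\<lambda>(i,j). A $$ (i, n - p + j)))"
proof -
  define m where "m = n - p"
  have nn: "n = p + m" using pn by (simp add: m_def)
  have A': "A \<in> carrier_mat (p + m) (p + m)" using A nn by simp
  let ?B = "mat (p + m) (p + m) (\<lambda>(i,j). A $$ (i, if j < p then j + m else j - p))"
  have "det A = (-1)^(p * m) * det ?B" by (rule det_swap_cols[OF A'])
  let ?Y = "mat p p (\<lambda>(i,j). A $$ (i, n - p + j))"
  let ?X = "mat p m (\<lambda>(i,j). A $$ (i, j))"
  have B: "?B = four_block_mat ?Y ?X (0\<^sub>m m p) (e \<cdot>\<^sub>m 1\<^sub>m m)"
  proof (rule eq_matI)
    fix i j assume i: "i < dim_row (four_block_mat ?Y ?X (0\<^sub>m m p) (e \<cdot>\<^sub>m 1\<^sub>m m))"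
      and j: "j < dim_col (four_block_mat ?Y ?X (0\<^sub>m m p) (e \<cdot>\<^sub>m 1\<^sub>m m))"
    hence i': "i < p + m" and j': "j < p + m" by auto
    have lhs: "?B $$ (i,j) = A $$ (i, if j < p then j + m else j - p)" using i' j' by simp
    show "?B $$ (i,j) = four_block_mat ?Y ?X (0\<^sub>m m p) (e \<cdot>\<^sub>m 1\<^sub>m m) $$ (i,j)"
    proof (cases "i < p")
      case True
      thus ?thesis unfolding lhs using i' j' by (cases "j < p") (simp_all add: nn add.commute)
    next
      case False
      show ?thesis
      proof (cases "j < p")
        case True
        have "A $$ (i, j + m) = 0" using low[of i "j + m"] False True i' by (simp add: nn)
        thus ?thesis unfolding lhs using i' j' False True by simp
      next
        case False2: False
        have "A $$ (i, j - p) = (if j - p + p = i then e else 0)" using low[of i "j - p"] False i' j' by (simp add: nn)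
        thus ?thesis unfolding lhs using i' j' False False2 by auto
      qed
    qed
  qed auto
  have "det ?B = det ?Y * det (e \<cdot>\<^sub>m 1\<^sub>m m)"
    unfolding B by (rule det_four_block_mat_lower_left_zero) auto
  also have "det (e \<cdot>\<^sub>m 1\<^sub>m m) = e^m" by simp
  finally show ?thesis using \<open>det A = _\<close> by (simp add: m_def)
qed


definition Hm :: "nat \<Rightarrow> nat \<Rightarrow> int mat" where
  "Hm k n = mat n n (\<lambda>(i,j). if i + j = 0 then 0 else Gp k (i+j-1) 0)"
definition L1m :: "nat \<Rightarrow> int mat" where
  "L1m n = mat n n (\<lambda>(r,c). if r = c then 1 else if r = 0 then (-1)^(c-1) else 0)"
definition L2m :: "nat \<Rightarrow> int mat" where
  "L2m n = mat n n (\<lambda>(r,c). if r = 0 then (if c = 0 then 1 else 0) else if c = 0 then 0 else Gp (c-1) (r-1) 0)"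
definition X1m :: "nat \<Rightarrow> nat \<Rightarrow> int mat" where
  "X1m k n = mat n n (\<lambda>(r,j). if r = 0 then (\<Sum>t\<in>{n-1..<n+k+1}. (-1)^t * Gp k j t) - (if j = 0 then (-1)^k else 0)
     else Gp k j (r-1))"

lemma L1X1:
  assumes n: "n = Suc n'" and c: "c < n" and j: "j < n"
  shows "(L1m n * X1m k n) $$ (c,j) = (if c = 0 then (if j = 0 then 0 else Gp k (j-1) 0) else Gp k j (c-1))"
proof -
  have e: "(L1m n * X1m k n) $$ (c,j) = (\<Sum>c'<n. L1m n $$ (c,c') * X1m k n $$ (c',j))"
    by (rule mult_entry) (auto simp: L1m_def X1m_def c j)
  show ?thesis
  proof (cases "c = 0")
    case False
    have "(\<Sum>c'<n. L1m n $$ (c,c') * X1m k n $$ (c',j)) = (\<Sum>c'<n. if c' = c then X1m k n $$ (c,j) else 0)"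
      by (rule sum.cong) (auto simp: L1m_def False c)
    also have "\<dots> = X1m k n $$ (c,j)" using c by (simp add: sum.delta')
    finally show ?thesis using e False c j by (simp add: X1m_def)
  next
    case True
    have "(\<Sum>c'<n. L1m n $$ (c,c') * X1m k n $$ (c',j)) =
       X1m k n $$ (0,j) + (\<Sum>t<n'. (-1)^t * Gp k j t)"
      unfolding n sum.lessThan_Suc_shift using True j n by (simp add: L1m_def X1m_def)
    also have "\<dots> = (\<Sum>t<n'+k+2. (-1)^t * Gp k j t) - (if j = 0 then (-1)^k else 0)"
    proof -
      have "(\<Sum>t<n'. (-1)^t * Gp k j t) + (\<Sum>t\<in>{n'..<n'+k+2}. (-1)^t * Gp k j t) = (\<Sum>t<n'+k+2. (-1)^t * Gp k j t)"
        unfolding lessThan_atLeast0 by (rule sum.atLeastLessThan_concat) auto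
      moreover have "n - 1 = n'" "n + k + 1 = n' + k + 2" using n by auto
      ultimately show ?thesis using j by (simp add: X1m_def n)
    qed
    also have "\<dots> = (if j = 0 then 0 else Gp k (j-1) 0)"
    proof (cases j)
      case 0 thus ?thesis using Gp_alt0[of k "n'+k+2"] by simp
    next
      case (Suc j') thus ?thesis using Gp_alt[of k j' "n'+k+2"] j n by simp
    qed
    finally show ?thesis using e True by simp
  qed
qed

lemma HL:
  assumes n: "n = Suc n'"
  shows "Hm k n = L2m n * (L1m n * X1m k n)"
proof (rule eq_matI)
  fix i j assume i: "i < dim_row (L2m n * (L1m n * X1m k n))" and j: "j < dim_col (L2m n * (L1m n * X1m k n))"
  hence i: "i < n" and j: "j < n" by (auto simp: L2m_def X1m_def)
  have e: "(L2m n * (L1m n * X1m k n)) $$ (i,j) = (\<Sum>c<n. L2m n $$ (i,c) * (L1m n * X1m k n) $$ (c,j))"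
    by (rule mult_entry) (auto simp: L1m_def L2m_def X1m_def i j)
  show "Hm k n $$ (i,j) = (L2m n * (L1m n * X1m k n)) $$ (i,j)"
  proof (cases "i = 0")
    case True
    have "(\<Sum>c<n. L2m n $$ (i,c) * (L1m n * X1m k n) $$ (c,j)) = (\<Sum>c<n. if c = 0 then (L1m n * X1m k n) $$ (0,j) else 0)"
      by (rule sum.cong) (auto simp: L2m_def True)
    also have "\<dots> = (L1m n * X1m k n) $$ (0,j)" using n by (simp add: sum.delta')
    finally show ?thesis using e True i j L1X1[OF n _ j, of 0] n by (simp add: Hm_def)
  next
    case False
    have LX: "ia < n' \<Longrightarrow> (L1m (Suc n') * X1m k (Suc n')) $$ (Suc ia, j) = Gp k j ia" for ia
      using L1X1[OF n, of "Suc ia" j] n j by simp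
    have "(\<Sum>c<n. L2m n $$ (i,c) * (L1m n * X1m k n) $$ (c,j)) = (\<Sum>r<n'. Gp r (i-1) 0 * Gp k j r)"
      unfolding n sum.lessThan_Suc_shift using False i j n
      by (simp add: L2m_def LX)
    also have "\<dots> = Gp k (i - 1 + j) 0" by (rule Gp_comp) (use i n False in auto)
    finally show ?thesis using e False i j by (simp add: Hm_def)
  qed
qed (auto simp: Hm_def L2m_def X1m_def)


definition swf :: "nat \<Rightarrow> nat \<Rightarrow> nat \<Rightarrow> int" where
  "swf P u v = (if u \<le> v \<and> (v - u) mod P = 0 then 1 else 0)"

lemma sw_diff: assumes P: "P > 0" shows "swf P a v - swf P (a + P) v = (if v = a then 1 else 0)"
proof -
  consider "v < a" | "a \<le> v \<and> v < a + P" | "a + P \<le> v" by linarith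
  thus ?thesis
  proof cases
    case 1 thus ?thesis by (simp add: swf_def)
  next
    case 2
    hence "(v - a) mod P = v - a" by (intro mod_less) linarith
    thus ?thesis using 2 by (auto simp: swf_def)
  next
    case 3
    have "(v - a) mod P = (v - a - P) mod P" using 3 by (simp add: le_mod_geq)
    moreover have "v - a - P = v - (a + P)" by simp
    ultimately show ?thesis using 3 P by (simp add: swf_def)
  qed
qed

lemma sw_eval: assumes x: "x < P" and b: "b < P" shows "swf P x (P*h + b) = (if x = b then 1 else 0)"
proof (cases "x \<le> b")
  case True
  have e: "P*h + b - x = (b - x) + P*h" using True by simp
  have "(P*h + b - x) mod P = (b - x) mod P" unfolding e by simp
  also have "\<dots> = b - x" using b by simp
  finally show ?thesis using True by (auto simp: swf_def)
next
  case False
  show ?thesis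
  proof (cases h)
    case 0 thus ?thesis using False by (simp add: swf_def)
  next
    case (Suc h')
    have e: "P*h + b - x = (P + b - x) + P*h'" using Suc False x by (simp add: algebra_simps)
    have "(P*h + b - x) mod P = (P + b - x) mod P" unfolding e by simp
    also have "\<dots> = P + b - x" using False b by simp
    finally show ?thesis using False x by (auto simp: swf_def)
  qed
qed

lemma sw_step: assumes P: "P > 0"
  shows "swf P u v = (if u = v then 1 else 0) + (if P \<le> v then swf P u (v - P) else 0)"
proof (cases "u = v")
  case True thus ?thesis using P by (simp add: swf_def; linarith)
next
  case False
  show ?thesis
  proof (cases "P \<le> v")
    case True
    show ?thesis
    proof (cases "u + P \<le> v")
      case True2: True
      have "(v - u) mod P = (v - u - P) mod P" using True2 by (simp add: le_mod_geq)
      moreover have "v - u - P = v - P - u" by simp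
      moreover have "u \<le> v - P" "u \<le> v" using True2 by linarith+
      ultimately show ?thesis using False True by (simp add: swf_def)
    next
      case False2: False
      have "\<not> (u \<le> v - P)" using False2 True by linarith
      moreover have "u \<le> v \<Longrightarrow> (v - u) mod P = v - u" using False2 by (intro mod_less) linarith
      ultimately show ?thesis using True False by (auto simp: swf_def)
    qed
  next
    case False2: False
    have "u \<le> v \<Longrightarrow> (v - u) mod P = v - u" using False2 by (intro mod_less) linarith
    thus ?thesis using False False2 by (auto simp: swf_def)
  qed
qed


definition Um :: "nat \<Rightarrow> int mat" where "Um n = mat n n (\<lambda>(i,j). ups i j)"
definition x2row :: "nat \<Rightarrow> nat \<Rightarrow> nat \<Rightarrow> int" where
  "x2row k n u = (if n \<le> k + u + 1 then (-1)^(k+u) else 0) - (-1)^k * ups 0 u"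
definition X2m :: "nat \<Rightarrow> nat \<Rightarrow> int mat" where
  "X2m k n = mat n n (\<lambda>(r,j). if r = 0 then x2row k n j else tau k j (r-1))"

lemma tau_top: assumes "k + 1 \<le> t" "j < t + 1" shows "tau k j t = (if t = j + k then 1 else 0)"
  using assms unfolding tau_def by auto

lemma X1U: assumes n: "k + 2 \<le> n" shows "X1m k n * Um n = X2m k n"
proof (rule eq_matI)
  fix r j assume r: "r < dim_row (X2m k n)" and j: "j < dim_col (X2m k n)"
  hence r: "r < n" and j: "j < n" by (auto simp: X2m_def)
  have e: "(X1m k n * Um n) $$ (r,j) = (\<Sum>i<n. X1m k n $$ (r,i) * Um n $$ (i,j))"
    by (rule mult_entry) (auto simp: X1m_def Um_def r j)
  show "(X1m k n * Um n) $$ (r,j) = X2m k n $$ (r,j)"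
  proof (cases "r = 0")
    case False
    have "(\<Sum>i<n. X1m k n $$ (r,i) * Um n $$ (i,j)) = (\<Sum>i<n. Gp k i (r-1) * ups i j)"
      by (rule sum.cong) (auto simp: X1m_def Um_def r j False)
    also have "\<dots> = tau k j (r-1)" by (rule Gups) (rule j)
    finally show ?thesis using e False r j by (simp add: X2m_def)
  next
    case True
    define T where "T = {n-1..<n+k+1}"
    have "(\<Sum>i<n. X1m k n $$ (r,i) * Um n $$ (i,j)) =
       (\<Sum>i<n. (\<Sum>t\<in>T. (-1)^t * Gp k i t) * ups i j - (if i = 0 then (-1)^k * ups 0 j else 0))"
      by (rule sum.cong) (auto simp: X1m_def Um_def True T_def algebra_simps j)
    also have "\<dots> = (\<Sum>i<n. (\<Sum>t\<in>T. (-1)^t * Gp k i t) * ups i j) - (-1)^k * ups 0 j"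
      using n by (simp add: sum_subtractf sum.delta')
    also have "(\<Sum>i<n. (\<Sum>t\<in>T. (-1)^t * Gp k i t) * ups i j) = (\<Sum>t\<in>T. (-1)^t * (\<Sum>i<n. Gp k i t * ups i j))"
      by (simp add: sum_distrib_right sum_distrib_left algebra_simps sum.swap[of _ T])
    also have "\<dots> = (\<Sum>t\<in>T. (-1)^t * tau k j t)" using Gups[OF j] by simp
    also have "\<dots> = (\<Sum>t\<in>T. if t = j + k then (-1)^(j+k) else 0)"
      by (rule sum.cong) (use n j in \<open>auto simp: T_def tau_top\<close>)
    also have "\<dots> = (if n \<le> k + j + 1 then (-1)^(k+j) else 0)"
      using j by (auto simp: T_def add.commute)
    finally show ?thesis using e True j by (simp add: X2m_def x2row_def)
  qed
qed (auto simp: X1m_def Um_def X2m_def)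

definition SWm :: "nat \<Rightarrow> nat \<Rightarrow> int mat" where "SWm k n = mat n n (\<lambda>(u,v). swf (2*k+2) u v)"
definition Rv :: "nat \<Rightarrow> nat \<Rightarrow> nat \<Rightarrow> int" where "Rv k n v = (\<Sum>u<n. x2row k n u * swf (2*k+2) u v)"

lemma sum_two_delta:
  fixes n a b :: nat
  assumes "a \<noteq> b" "a < n" "b \<ge> n \<Longrightarrow> f b = 0"
  shows "(\<Sum>u<n. ((if u = a then 1 else 0) - (if u = b then 1 else 0)) * (f u :: int)) = f a - f b"
proof -
  have "(\<Sum>u<n. ((if u = a then 1 else 0) - (if u = b then 1 else 0)) * f u)
     = (\<Sum>u<n. if u = a then f u else 0) - (\<Sum>u<n. if u = b then f u else 0)"
  proof -
    have "((if u = a then 1 else 0) - (if u = b then 1 else 0)) * f u = (if u = a then f u else 0) - (if u = b then f u else 0)" for u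
      by auto
    thus ?thesis by (simp only: sum_subtractf)
  qed
  moreover have "(\<Sum>u<n. if u = a then f u else 0) = f a" using assms(2) by simp
  moreover have "(\<Sum>u<n. if u = b then f u else 0) = f b" using assms(3) by (cases "b < n") simp_all
  ultimately show ?thesis by simp
qed

lemma X3_entry:
  assumes r: "r < n" and v: "v < n"
  shows "(X2m k n * SWm k n) $$ (r,v) = (\<Sum>u<n. X2m k n $$ (r,u) * swf (2*k+2) u v)"
  by (subst mult_entry) (auto simp: X2m_def SWm_def r v intro!: sum.cong)

lemma X3_row0: assumes "0 < n" "v < n" shows "(X2m k n * SWm k n) $$ (0,v) = Rv k n v"
  unfolding X3_entry[OF assms] Rv_def by (rule sum.cong) (auto simp: X2m_def)

lemma X3_low:
  assumes r: "r < n" and v: "v < n" and rk: "k + 1 \<le> r"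
  shows "(X2m k n * SWm k n) $$ (r,v) = (if v + k + 1 = r then 1 else 0)"
proof -
  define t where "t = r - 1"
  have tk: "k \<le> t" "t < n" using rk r by (auto simp: t_def)
  have "(\<Sum>u<n. X2m k n $$ (r,u) * swf (2*k+2) u v)
     = (\<Sum>u<n. ((if u = t - k then 1 else 0) - (if u = (t - k) + (2*k+2) then 1 else 0)) * swf (2*k+2) u v)"
    by (rule sum.cong) (use rk tk r in \<open>auto simp: X2m_def tau_def t_def\<close>)
  also have "\<dots> = swf (2*k+2) (t - k) v - swf (2*k+2) ((t - k) + (2*k+2)) v"
    by (rule sum_two_delta) (use tk v in \<open>auto simp: swf_def\<close>)
  also have "\<dots> = (if v = t - k then 1 else 0)" by (rule sw_diff) simp
  finally show ?thesis unfolding X3_entry[OF r v] using rk tk by (auto simp: t_def)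
qed

lemma X3_mid:
  assumes r: "r < n" and v: "v < n" and r1: "1 \<le> r" and rk: "r \<le> k" and n: "k + 2 \<le> n"
  shows "(X2m k n * SWm k n) $$ (r,v) = swf (2*k+2) (k+1-r) v - swf (2*k+2) (r+k+1) v"
proof -
  have "(\<Sum>u<n. X2m k n $$ (r,u) * swf (2*k+2) u v)
     = (\<Sum>u<n. ((if u = k+1-r then 1 else 0) - (if u = r+k+1 then 1 else 0)) * swf (2*k+2) u v)"
    by (rule sum.cong) (use r1 rk r in \<open>auto simp: X2m_def tau_def\<close>)
  also have "\<dots> = swf (2*k+2) (k+1-r) v - swf (2*k+2) (r+k+1) v"
    by (rule sum_two_delta) (use r1 rk r v n in \<open>auto simp: swf_def\<close>)
  finally show ?thesis unfolding X3_entry[OF r v] .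
qed

lemma Rv_step: assumes v: "v < n"
  shows "Rv k n v = x2row k n v + (if 2*k+2 \<le> v then Rv k n (v - (2*k+2)) else 0)"
proof -
  have "Rv k n v = (\<Sum>u<n. (if u = v then x2row k n v else 0) + (if 2*k+2 \<le> v then x2row k n u * swf (2*k+2) u (v - (2*k+2)) else 0))"
  proof -
    have pt: "x2row k n u * swf (2*k+2) u v = (if u = v then x2row k n v else 0) + (if 2*k+2 \<le> v then x2row k n u * swf (2*k+2) u (v - (2*k+2)) else 0)" for u
      using sw_step[of "2*k+2" u v] by (cases "u = v") (auto simp: algebra_simps)
    show ?thesis unfolding Rv_def pt ..
  qed
  also have "\<dots> = x2row k n v + (if 2*k+2 \<le> v then Rv k n (v - (2*k+2)) else 0)"
    using v by (simp add: sum.distrib sum.delta sum.delta' Rv_def)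
  finally show ?thesis .
qed

lemma det_L1: "det (L1m n) = 1"
  by (rule det_upper_one[of _ n]) (auto simp: L1m_def)
lemma det_L2: "det (L2m n) = 1"
  by (rule det_lower_one[of _ n]) (auto simp: L2m_def Gp_zero_src Gp_diag)
lemma det_U: "det (Um n) = 1"
  by (rule det_upper_one[of _ n]) (auto simp: Um_def ups_upper ups_diag)
lemma det_SW: "det (SWm k n) = 1"
  by (rule det_upper_one[of _ n]) (auto simp: SWm_def swf_def)

lemma det_H_X3: assumes n: "k + 2 \<le> n" shows "det (Hm k n) = det (X2m k n * SWm k n)"
proof -
  obtain n' where n': "n = Suc n'" using n by (cases n) auto
  have c: "L1m n \<in> carrier_mat n n" "L2m n \<in> carrier_mat n n" "X1m k n \<in> carrier_mat n n"
    "Um n \<in> carrier_mat n n" "SWm k n \<in> carrier_mat n n" "X2m k n \<in> carrier_mat n n"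
    by (auto simp: L1m_def L2m_def X1m_def Um_def SWm_def X2m_def)
  have "det (Hm k n) = det (X1m k n)"
    unfolding HL[OF n'] using c by (simp add: det_mult[of _ n] det_L1 det_L2)
  also have "\<dots> = det (X2m k n)" unfolding X1U[OF n, symmetric] using c by (simp add: det_mult[of _ n] det_U)
  also have "\<dots> = det (X2m k n * SWm k n)" using c by (simp add: det_mult[of _ n] det_SW)
  finally show ?thesis .
qed


lemma neg1_even: "(-1::int)^(2*x) = 1"
  by (simp add: power_mult)

lemma neg1_P: "(-1::int)^((2*k+2)*h) = 1"
proof -
  have "(2*k+2)*h = 2*((k+1)*h)" by simp
  thus ?thesis by (simp only: neg1_even)
qed

lemma x2row_nontop: assumes "k + u + 1 < n" shows "x2row k n u = - ((-1)^k * ups 0 u)"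
  using assms by (simp add: x2row_def)

lemma Rv_step2: "v < n \<Longrightarrow> 2*k+2 \<le> v \<Longrightarrow> Rv k n v = x2row k n v + Rv k n (v - (2*k+2))"
  using Rv_step[of v n k] by simp

lemma Rv_class0:
  assumes n: "k + 2 \<le> n" shows "(2*k+2)*h + k + 1 < n \<Longrightarrow> Rv k n ((2*k+2)*h) = - ((-1)^k * (2*int h + 1))"
proof (induction h)
  case 0
  have "Rv k n 0 = x2row k n 0" using Rv_step[of 0 n k] n by simp
  thus ?case using n by (simp add: x2row_def)
next
  case (Suc h)
  let ?v = "(2*k+2)*Suc h"
  have v: "?v < n" using Suc.prems by simp
  have e: "?v - (2*k+2) = (2*k+2)*h" by simp
  have "Rv k n ?v = x2row k n ?v + Rv k n ((2*k+2)*h)"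
    using Rv_step2[OF v, of k] unfolding e by simp
  also have "Rv k n ((2*k+2)*h) = - ((-1)^k * (2*int h + 1))" using Suc by simp
  also have "x2row k n ?v = - ((-1)^k * 2)" using Suc.prems
    by (simp add: x2row_def ups_0 neg1_P del: mult_Suc_right)
  finally show ?case by (simp add: algebra_simps)
qed

lemma Rv_top0:
  assumes n: "k + 2 \<le> n" and h: "h \<ge> 1" and v: "(2*k+2)*h < n" and top: "n \<le> (2*k+2)*h + k + 1"
  shows "Rv k n ((2*k+2)*h) = - ((-1)^k * (2*int h))"
proof -
  obtain h' where h': "h = Suc h'" using h by (cases h) auto
  have e: "(2*k+2)*h - (2*k+2) = (2*k+2)*h'" using h' by simp
  have "Rv k n ((2*k+2)*h) = x2row k n ((2*k+2)*h) + Rv k n ((2*k+2)*h')"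
    using Rv_step2[OF v, of k] h' unfolding e by simp
  also have "Rv k n ((2*k+2)*h') = - ((-1)^k * (2*int h' + 1))"
    by (rule Rv_class0[OF n]) (use v h' in simp)
  also have "x2row k n ((2*k+2)*h) = (-1)^k - (-1)^k * 2"
    using top h' by (simp add: x2row_def ups_0 neg1_P power_add del: mult_Suc_right)
  finally show ?thesis using h' by (simp add: algebra_simps)
qed

lemma Rv_class1:
  assumes n: "k + 2 \<le> n" shows "(2*k+2)*h + (k+1) + k + 1 < n \<Longrightarrow> Rv k n ((2*k+2)*h + (k+1)) = 2*int h + 2"
proof (induction h)
  case 0
  have "Rv k n (k+1) = x2row k n (k+1)" using Rv_step[of "k+1" n k] 0 by simp
  thus ?case using 0 by (simp add: x2row_def ups_0)
next
  case (Suc h)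
  let ?v = "(2*k+2)*Suc h + (k+1)"
  have v: "?v < n" using Suc.prems by simp
  have e: "?v - (2*k+2) = (2*k+2)*h + (k+1)" by simp
  have "Rv k n ?v = x2row k n ?v + Rv k n ((2*k+2)*h + (k+1))"
    using Rv_step2[OF v, of k] unfolding e by simp
  also have "Rv k n ((2*k+2)*h + (k+1)) = 2*int h + 2" using Suc by simp
  also have "x2row k n ?v = 2"
  proof -
    have "(-1::int)^((2*k+2)*Suc h + (k+1)) = (-1)^(k+1)" by (simp only: power_add neg1_P; simp)
    thus ?thesis using Suc.prems by (simp add: x2row_def ups_0 del: mult_Suc_right)
  qed
  finally show ?case by (simp add: algebra_simps)
qed

lemma Rv_top1:
  assumes n: "k + 2 \<le> n" and v: "(2*k+2)*h + (k+1) < n" and top: "n \<le> (2*k+2)*h + (k+1) + k + 1"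
  shows "Rv k n ((2*k+2)*h + (k+1)) = 2*int h + 1"
proof -
  have p: "(-1::int)^((2*k+2)*h + (k+1)) = (-1)^(k+1)" by (simp only: power_add neg1_P; simp)
  have x: "x2row k n ((2*k+2)*h + (k+1)) = -1 + 2"
  proof -
    have "(-1::int)^(k + ((2*k+2)*h + (k+1))) = 1 * (-1)^(2*k+1)"
      by (simp only: power_add neg1_P) (simp add: power_add)
    hence "(-1::int)^(k + ((2*k+2)*h + (k+1))) = -1" by (simp add: power_add)
    thus ?thesis using top p by (simp add: x2row_def ups_0 del: mult_Suc_right)
  qed
  show ?thesis
  proof (cases h)
    case 0
    have "Rv k n (k+1) = x2row k n (k+1)" using Rv_step[of "k+1" n k] v 0 by simp
    thus ?thesis using x 0 by simp
  next
    case (Suc h')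
    have e: "(2*k+2)*h + (k+1) - (2*k+2) = (2*k+2)*h' + (k+1)" using Suc by simp
    have "Rv k n ((2*k+2)*h + (k+1)) = x2row k n ((2*k+2)*h + (k+1)) + Rv k n ((2*k+2)*h' + (k+1))"
      using Rv_step2[OF v, of k] Suc unfolding e by simp
    also have "Rv k n ((2*k+2)*h' + (k+1)) = 2*int h' + 2"
      by (rule Rv_class1[OF n]) (use v Suc in simp)
    finally show ?thesis using x Suc by simp
  qed
qed


definition Ym :: "nat \<Rightarrow> nat \<Rightarrow> int mat" where
  "Ym k n = mat (k+1) (k+1) (\<lambda>(i,j). (X2m k n * SWm k n) $$ (i, n - (k+1) + j))"

lemma det_X3: assumes n: "k + 2 \<le> n"
  shows "det (X2m k n * SWm k n) = (-1)^((k+1)*(n-(k+1))) * det (Ym k n)"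
proof -
  have c: "X2m k n * SWm k n \<in> carrier_mat n n"
    by (rule mult_carrier_mat[of _ n n]) (simp_all add: X2m_def SWm_def)
  have "det (X2m k n * SWm k n) = (-1)^((k+1)*(n-(k+1))) * 1^(n-(k+1)) *
      det (mat (k+1) (k+1) (\<lambda>(i,j). (X2m k n * SWm k n) $$ (i, n - (k+1) + j)))"
    by (rule det_block[OF c]) (use n in \<open>auto simp: X3_low\<close>)
  thus ?thesis by (simp add: Ym_def)
qed

lemma Y0: assumes n: "k + 2 \<le> n" and j: "j \<le> k" shows "Ym k n $$ (0,j) = Rv k n (n-(k+1)+j)"
  using n j by (simp add: Ym_def X3_row0)

lemma Yi: assumes n: "k + 2 \<le> n" and i: "1 \<le> i" "i \<le> k" and j: "j \<le> k"
  shows "Ym k n $$ (i,j) = swf (2*k+2) (k+1-i) (n-(k+1)+j) - swf (2*k+2) (i+k+1) (n-(k+1)+j)"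
  using n i j by (simp add: Ym_def X3_mid)

lemma Ym_carrier: "Ym k n \<in> carrier_mat (Suc k) (Suc k)" by (simp add: Ym_def)

lemma case_a: assumes h: "h \<ge> 1" and n: "n = (2*k+2)*h + (k+1)"
  shows "det (Ym k n) = - ((-1)^k * (2*int h)) * (-1)^(k choose 2)"
proof -
  have n2: "k + 2 \<le> n" using h n by (cases h) auto
  have w: "n - (k+1) = (2*k+2)*h" using n by simp
  have Yv: "Ym k n $$ (i,j) = (if k+1-i = j then 1 else 0)" if "1 \<le> i" "i \<le> k" "j \<le> k" for i j
  proof -
    have s1: "swf (2*k+2) (k+1-i) ((2*k+2)*h + j) = (if k+1-i = j then 1 else 0)"
      by (rule sw_eval) (use that in auto)
    have s2: "swf (2*k+2) (i+k+1) ((2*k+2)*h + j) = 0"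
      using sw_eval[of "i+k+1" "2*k+2" j h] that by simp
    show ?thesis unfolding Yi[OF n2 that] w s1 s2 by simp
  qed
  have "det (Ym k n) = Ym k n $$ (0,0) * (-1)^0 * det (mat k k (\<lambda>(i,l). Ym k n $$ (Suc i, if l < 0 then l else Suc l)))"
    by (rule det_col_single[OF Ym_carrier]) (auto simp: Yv)
  also have "mat k k (\<lambda>(i,l). Ym k n $$ (Suc i, if l < 0 then l else Suc l)) = mat k k (\<lambda>(i,j). if i + j + 1 = k then 1 else 0)"
    by (rule eq_matI) (auto simp: Yv)
  finally have D: "det (Ym k n) = Ym k n $$ (0,0) * (-1)^0 * det (mat k k (\<lambda>(i,j). if i + j + 1 = k then 1 else 0))" .
  have Y00: "Ym k n $$ (0,0) = - ((-1)^k * (2*int h))"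
    unfolding Y0[OF n2 le0] w using Rv_top0[OF n2 h] n by simp
  note D
  moreover have A: "det (mat k k (\<lambda>(i,j). if i + j + 1 = k then 1 else 0) :: int mat) = (-1)^(k choose 2)"
    by (rule det_anti)
  ultimately show ?thesis using Y00 by simp
qed

lemma case_b: assumes n: "n = (2*k+2)*h + (2*k+2)"
  shows "det (Ym k n) = (2*int h + 1) * (-1)^k"
proof -
  have n2: "k + 2 \<le> n" using n by auto
  have w: "n - (k+1) = (2*k+2)*h + (k+1)" using n by simp
  have Yv: "Ym k n $$ (i,j) = (if i = j then -1 else 0)" if "1 \<le> i" "i \<le> k" "j \<le> k" for i j
  proof -
    have "Ym k n $$ (i,j) = swf (2*k+2) (k+1-i) ((2*k+2)*h + (k+1+j)) - swf (2*k+2) (i+k+1) ((2*k+2)*h + (k+1+j))"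
      unfolding Yi[OF n2 that] w by (simp add: add.assoc)
    moreover have "swf (2*k+2) (k+1-i) ((2*k+2)*h + (k+1+j)) = 0"
      using sw_eval[of "k+1-i" "2*k+2" "k+1+j" h] that by simp
    moreover have "swf (2*k+2) (i+k+1) ((2*k+2)*h + (k+1+j)) = (if i = j then 1 else 0)"
      using sw_eval[of "i+k+1" "2*k+2" "k+1+j" h] that by simp
    ultimately show ?thesis by simp
  qed
  have "det (Ym k n) = Ym k n $$ (0,0) * (-1)^0 * det (mat k k (\<lambda>(i,l). Ym k n $$ (Suc i, if l < 0 then l else Suc l)))"
    by (rule det_col_single[OF Ym_carrier]) (auto simp: Yv)
  also have "mat k k (\<lambda>(i,l). Ym k n $$ (Suc i, if l < 0 then l else Suc l)) = (-1) \<cdot>\<^sub>m 1\<^sub>m k"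
    by (rule eq_matI) (auto simp: Yv)
  also have "Ym k n $$ (0,0) = 2*int h + 1"
    unfolding Y0[OF n2 le0] w using Rv_top1[OF n2] n by simp
  finally show ?thesis by simp
qed

lemma case_c: assumes h: "h \<ge> 1" and n: "n = (2*k+2)*h + 1"
  shows "det (Ym k n) = - ((-1)^k * (2*int h))"
proof -
  obtain h' where h': "h = Suc h'" using h by (cases h) auto
  have n2: "k + 2 \<le> n" using h n by (cases h) auto
  have w: "n - (k+1) = (2*k+2)*h' + (k+2)" using n h' by simp
  have Yv: "Ym k n $$ (i,j) = (if j + 1 = i then -1 else 0)" if "1 \<le> i" "i \<le> k" "j \<le> k" for i j
  proof (cases "j < k")
    case True
    have "Ym k n $$ (i,j) = swf (2*k+2) (k+1-i) ((2*k+2)*h' + (k+2+j)) - swf (2*k+2) (i+k+1) ((2*k+2)*h' + (k+2+j))"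
      unfolding Yi[OF n2 that] w by (simp add: add.assoc)
    moreover have "swf (2*k+2) (k+1-i) ((2*k+2)*h' + (k+2+j)) = 0"
      using sw_eval[of "k+1-i" "2*k+2" "k+2+j" h'] that True by simp
    moreover have "swf (2*k+2) (i+k+1) ((2*k+2)*h' + (k+2+j)) = (if j + 1 = i then 1 else 0)"
      using sw_eval[of "i+k+1" "2*k+2" "k+2+j" h'] that True by auto
    ultimately show ?thesis by simp
  next
    case False
    hence jk: "j = k" using that by simp
    have "n - (k+1) + j = (2*k+2)*h + 0" using w jk h' by simp
    hence "Ym k n $$ (i,j) = swf (2*k+2) (k+1-i) ((2*k+2)*h + 0) - swf (2*k+2) (i+k+1) ((2*k+2)*h + 0)"
      unfolding Yi[OF n2 that] by simp
    moreover have "swf (2*k+2) (k+1-i) ((2*k+2)*h + 0) = 0"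
      using sw_eval[of "k+1-i" "2*k+2" 0 h] that by simp
    moreover have "swf (2*k+2) (i+k+1) ((2*k+2)*h + 0) = 0"
      using sw_eval[of "i+k+1" "2*k+2" 0 h] that by simp
    ultimately show ?thesis using jk that by simp
  qed
  have "det (Ym k n) = Ym k n $$ (0,k) * (-1)^k * det (mat k k (\<lambda>(i,l). Ym k n $$ (Suc i, if l < k then l else Suc l)))"
    by (rule det_col_single[OF Ym_carrier]) (auto simp: Yv)
  also have "mat k k (\<lambda>(i,l). Ym k n $$ (Suc i, if l < k then l else Suc l)) = (-1) \<cdot>\<^sub>m 1\<^sub>m k"
    by (rule eq_matI) (auto simp: Yv)
  also have "Ym k n $$ (0,k) = - ((-1)^k * (2*int h))"
  proof -
    have "n - (k+1) + k = (2*k+2)*h" using w h' by simp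
    thus ?thesis unfolding Y0[OF n2 le_refl] using Rv_top0[OF n2 h] n by simp
  qed
  finally show ?thesis by (simp add: power_add[symmetric] neg1_even mult_2[symmetric])
qed

lemma case_d: assumes n: "n = (2*k+2)*h + (k+2)"
  shows "det (Ym k n) = (2*int h + 1) * (-1)^k * (-1)^(k choose 2)"
proof -
  have n2: "k + 2 \<le> n" using n by auto
  have w: "n - (k+1) = (2*k+2)*h + 1" using n by simp
  have Yv: "Ym k n $$ (i,j) = (if i + j = k then 1 else 0)" if "1 \<le> i" "i \<le> k" "j \<le> k" for i j
  proof -
    have "Ym k n $$ (i,j) = swf (2*k+2) (k+1-i) ((2*k+2)*h + (1+j)) - swf (2*k+2) (i+k+1) ((2*k+2)*h + (1+j))"
      unfolding Yi[OF n2 that] w by (simp add: add.assoc)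
    moreover have "swf (2*k+2) (k+1-i) ((2*k+2)*h + (1+j)) = (if i + j = k then 1 else 0)"
      using sw_eval[of "k+1-i" "2*k+2" "1+j" h] that by auto
    moreover have "swf (2*k+2) (i+k+1) ((2*k+2)*h + (1+j)) = 0"
      using sw_eval[of "i+k+1" "2*k+2" "1+j" h] that by simp
    ultimately show ?thesis by simp
  qed
  have "det (Ym k n) = Ym k n $$ (0,k) * (-1)^k * det (mat k k (\<lambda>(i,l). Ym k n $$ (Suc i, if l < k then l else Suc l)))"
    by (rule det_col_single[OF Ym_carrier]) (auto simp: Yv)
  also have "mat k k (\<lambda>(i,l). Ym k n $$ (Suc i, if l < k then l else Suc l)) = mat k k (\<lambda>(i,j). if i + j + 1 = k then 1 else 0)"
    by (rule eq_matI) (auto simp: Yv)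
  finally have D: "det (Ym k n) = Ym k n $$ (0,k) * (-1)^k * det (mat k k (\<lambda>(i,j). if i + j + 1 = k then 1 else 0))" .
  have Y00: "Ym k n $$ (0,k) = 2*int h + 1"
  proof -
    have "n - (k+1) + k = (2*k+2)*h + (k+1)" using w by simp
    thus ?thesis unfolding Y0[OF n2 le_refl] using Rv_top1[OF n2] n by simp
  qed
  note D
  moreover have A: "det (mat k k (\<lambda>(i,j). if i + j + 1 = k then 1 else 0) :: int mat) = (-1)^(k choose 2)"
    by (rule det_anti)
  ultimately show ?thesis using Y00 by simp
qed


lemma case_e: assumes n: "n = (2*k+2)*h + (k+1) + p" and p: "2 \<le> p" "p \<le> k"
  shows "det (Ym k n) = 0"
proof (rule det_zero_row[OF Ym_carrier, of k])
  show "k < Suc k" by simp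
  have n2: "k + 2 \<le> n" using n p by simp
  fix j assume j: "j < Suc k"
  have w: "n - (k+1) + j = (2*k+2)*h + (p + j)" using n by simp
  have s1: "swf (2*k+2) (k+1-k) ((2*k+2)*h + (p+j)) = 0"
    using sw_eval[of "k+1-k" "2*k+2" "p+j" h] p j by simp
  have s2: "swf (2*k+2) (k+k+1) ((2*k+2)*h + (p+j)) = 0"
    using sw_eval[of "k+k+1" "2*k+2" "p+j" h] p j by simp
  have y: "Ym k n $$ (k,j) = swf (2*k+2) (k+1-k) (n-(k+1)+j) - swf (2*k+2) (k+k+1) (n-(k+1)+j)"
    by (rule Yi[OF n2]) (use p j in auto)
  show "Ym k n $$ (k,j) = 0" unfolding y w s1 s2 by simp
qed

lemma case_f: assumes n: "n = (2*k+2)*h + (2*k+2) + p" and p: "2 \<le> p" "p \<le> k"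
  shows "det (Ym k n) = 0"
proof (rule det_zero_row[OF Ym_carrier, of 1])
  show "1 < Suc k" using p by simp
  have n2: "k + 2 \<le> n" using n p by simp
  fix j assume j: "j < Suc k"
  have y: "Ym k n $$ (1,j) = swf (2*k+2) (k+1-1) (n-(k+1)+j) - swf (2*k+2) (1+k+1) (n-(k+1)+j)"
    by (rule Yi[OF n2]) (use p j in auto)
  show "Ym k n $$ (1,j) = 0"
  proof (cases "k + 1 + p + j < 2*k+2")
    case True
    have w: "n - (k+1) + j = (2*k+2)*h + (k+1+p+j)" using n by simp
    have s1: "swf (2*k+2) (k+1-1) ((2*k+2)*h + (k+1+p+j)) = 0"
      using sw_eval[of "k+1-1" "2*k+2" "k+1+p+j" h] p j True by simp
    have s2: "swf (2*k+2) (1+k+1) ((2*k+2)*h + (k+1+p+j)) = 0"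
      using sw_eval[of "1+k+1" "2*k+2" "k+1+p+j" h] p j True by simp
    show ?thesis unfolding y w s1 s2 by simp
  next
    case False
    have w: "n - (k+1) + j = (2*k+2)*Suc h + (p+j-(k+1))" using n False by simp
    have s1: "swf (2*k+2) (k+1-1) ((2*k+2)*Suc h + (p+j-(k+1))) = 0"
      using sw_eval[of "k+1-1" "2*k+2" "p+j-(k+1)" "Suc h"] p j False by simp
    have s2: "swf (2*k+2) (1+k+1) ((2*k+2)*Suc h + (p+j-(k+1))) = 0"
      using sw_eval[of "1+k+1" "2*k+2" "p+j-(k+1)" "Suc h"] p j False by simp
    show ?thesis unfolding y w s1 s2 by simp
  qed
qed

lemma small_case: assumes n: "n \<le> k + 1" "1 \<le> n" shows "det (Hm k n) = 0"
proof (rule det_zero_row[of _ n 0])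
  show "Hm k n \<in> carrier_mat n n" by (simp add: Hm_def)
  show "0 < n" using n by simp
  fix j assume j: "j < n"
  show "Hm k n $$ (0,j) = 0" using j n by (auto simp: Hm_def intro!: Gp_zero_src)
qed


lemma pw2: "(-1::int)^(2*a + b) = (-1)^b"
  by (simp add: power_add power_mult)

lemma C2: "(k+1) choose 2 = k + (k choose 2)"
  using binomial_Suc_Suc[of k 1] by (simp add: numeral_2_eq_2)

theorem det_Hm:
  assumes n1: "n \<ge> 1"
  shows "det (Hm k n) =
    (if n mod (k + 1) = 0 then
       (-1) ^ ((n div (k + 1)) * ((k + 1) choose 2) + 1) * (int (n div (k + 1)) - 1)
     else if n mod (k + 1) = 1 then
       (-1) ^ ((n div (k + 1)) * ((k + 1) choose 2) + k + 1) * int (n div (k + 1))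
     else 0)"
proof (cases "n \<le> k + 1")
  case True
  have "det (Hm k n) = 0" by (rule small_case[OF True n1])
  moreover have "n = k + 1 \<or> n \<le> k" using True by auto
  ultimately show ?thesis
  proof (elim disjE)
    assume "n = k + 1" thus ?thesis using \<open>det (Hm k n) = 0\<close> by simp
  next
    assume nk: "n \<le> k"
    hence "n mod (k+1) = n" "n div (k+1) = 0" by simp_all
    thus ?thesis using \<open>det (Hm k n) = 0\<close> n1 nk by (cases "n = 1") auto
  qed
next
  case False
  hence n2: "k + 2 \<le> n" by simp
  define q where "q = n div (k+1)"
  define p where "p = n mod (k+1)"
  have nqp: "n = (k+1)*q + p" unfolding q_def p_def by (metis div_mult_mod_eq mult.commute)
  have pk: "p \<le> k" unfolding p_def by (metis less_Suc_eq_le mod_less_divisor zero_less_Suc Suc_eq_plus1)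
  have D: "det (Hm k n) = (-1)^((k+1)*(n-(k+1))) * det (Ym k n)"
    using det_H_X3[OF n2] det_X3[OF n2] by simp
  define C where "C = (k+1) choose 2"
  have C: "C = k + (k choose 2)" unfolding C_def by (rule C2)
  define h where "h = q div 2"
  have hq: "q = 2*h \<or> q = 2*h + 1" unfolding h_def by presburger
  have sq: "(-1::int)^(m*m) = (-1)^m" for m
    by (cases "even m") (simp_all add: power_mult)
  have sq1: "(-1::int)^(m*(m+1)) = 1" for m
    by (cases "even m") (simp_all add: power_mult)
  have RHS: "(if n mod (k + 1) = 0 then
       (-1) ^ ((n div (k + 1)) * ((k + 1) choose 2) + 1) * (int (n div (k + 1)) - 1)
     else if n mod (k + 1) = 1 then
       (-1) ^ ((n div (k + 1)) * ((k + 1) choose 2) + k + 1) * int (n div (k + 1))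
     else 0) = (if p = 0 then (-1)^(q*C+1) * (int q - 1) else if p = 1 then (-1)^(q*C+k+1) * int q else 0)"
    unfolding p_def q_def C_def ..
  consider "p = 0" | "p = 1" | "2 \<le> p" by linarith
  thus ?thesis
  proof cases
    case 1
    show ?thesis unfolding RHS D
    proof (cases "q = 2*h")
      case False
      hence q: "q = 2*h + 1" using hq by simp
      have n: "n = (2*k+2)*h + (k+1)" using nqp q 1 by (simp add: algebra_simps)
      have h1: "h \<ge> 1" using n n2 by (cases h) auto
      have e: "(k+1)*(n-(k+1)) = 2*((k+1)*(k+1)*h) + 0" using n by (simp add: algebra_simps)
      have e2: "q*C+1 = 2*(h*C) + (k + (k choose 2) + 1)" using q C by (simp add: algebra_simps)
      show "(-1)^((k+1)*(n-(k+1))) * det (Ym k n) = (if p = 0 then (-1)^(q*C+1) * (int q - 1) else if p = 1 then (-1)^(q*C+k+1) * int q else 0)"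
        unfolding e e2 pw2 case_a[OF h1 n] using 1 q by (simp add: power_add)
    next
      case True
      have q: "q = 2*h" by (rule True)
      have h1: "h \<ge> 1" using nqp q 1 n2 by (cases h) auto
      obtain h' where hh': "h = Suc h'" using h1 by (cases h) auto
      have n: "n = (2*k+2)*h' + (2*k+2)" using nqp q 1 hh' by (simp add: algebra_simps)
      have e: "(k+1)*(n-(k+1)) = 2*((k+1)*(k+1)*h') + (k+1)*(k+1)" using n by (simp add: algebra_simps)
      have e2: "q*C+1 = 2*(h*C) + 1" using q by (simp add: algebra_simps)
      have hh: "int q - 1 = 2 * int h' + 1" using q hh' by simp
      show "(-1)^((k+1)*(n-(k+1))) * det (Ym k n) = (if p = 0 then (-1)^(q*C+1) * (int q - 1) else if p = 1 then (-1)^(q*C+k+1) * int q else 0)"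
        unfolding e e2 pw2 case_b[OF n] sq hh using 1 by (simp add: power_add ac_simps)
    qed
  next
    case 2
    show ?thesis unfolding RHS D
    proof (cases "q = 2*h")
      case True
      have q: "q = 2*h" by (rule True)
      have h1: "h \<ge> 1" using nqp q 2 n2 by (cases h) auto
      obtain h' where hh': "h = Suc h'" using h1 by (cases h) auto
      have n: "n = (2*k+2)*h + 1" using nqp q 2 by (simp add: algebra_simps)
      have e: "(k+1)*(n-(k+1)) = 2*((k+1)*(k+1)*h') + (k+1)*((k+1)+1)" using n hh' by (simp add: algebra_simps)
      have e2: "q*C+k+1 = 2*(h*C) + (k+1)" using q by (simp add: algebra_simps)
      show "(-1)^((k+1)*(n-(k+1))) * det (Ym k n) = (if p = 0 then (-1)^(q*C+1) * (int q - 1) else if p = 1 then (-1)^(q*C+k+1) * int q else 0)"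
        unfolding e e2 pw2 case_c[OF h1 n] sq1 using 2 q by (simp add: power_add)
    next
      case False
      hence q: "q = 2*h + 1" using hq by simp
      have n: "n = (2*k+2)*h + (k+2)" using nqp q 2 by (simp add: algebra_simps)
      have e: "(k+1)*(n-(k+1)) = 2*((k+1)*(k+1)*h) + (k+1)" using n by (simp add: algebra_simps)
      have e2: "q*C+k+1 = 2*(h*C + k) + ((k choose 2) + 1)" using q C by (simp add: algebra_simps)
      show "(-1)^((k+1)*(n-(k+1))) * det (Ym k n) = (if p = 0 then (-1)^(q*C+1) * (int q - 1) else if p = 1 then (-1)^(q*C+k+1) * int q else 0)"
        unfolding e e2 pw2 case_d[OF n] using 2 q by (simp add: power_add ac_simps)
    qed
  next
    case 3
    have "det (Ym k n) = 0"
    proof (cases "q = 2*h")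
      case True
      have h1: "h \<ge> 1" using nqp True 3 n2 pk by (cases h) auto
      obtain h' where hh': "h = Suc h'" using h1 by (cases h) auto
      have n: "n = (2*k+2)*h' + (2*k+2) + p" using nqp True hh' by (simp add: algebra_simps)
      show ?thesis by (rule case_f[OF n 3 pk])
    next
      case False
      hence q: "q = 2*h + 1" using hq by simp
      have n: "n = (2*k+2)*h + (k+1) + p" using nqp q by (simp add: algebra_simps)
      show ?thesis by (rule case_e[OF n 3 pk])
    qed
    thus ?thesis unfolding RHS D using 3 by simp
  qed
qed




lemma entry_eq: assumes ij: "i + j = Suc m" shows "thm19_entry k i j = rat_of_int (Gp k m 0)"
proof -
  have e: "2*i+2*j-1 = 2*m+1" "i+j+k = m+k+1" "i+j+k+1 = m+k+2" using ij by auto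
  have nz: "\<not> (i = 0 \<and> j = 0)" using ij by auto
  have t: "thm19_entry k i j = of_nat (2*k+2) / of_nat (m+k+2) * of_nat ((2*m+1) choose (m+k+1))"
  proof -
    have e4: "m + k + 1 + 1 = m + k + 2" by simp
    show ?thesis unfolding thm19_entry_def using nz by (simp only: e e4 if_False)
  qed
  have "rat_of_int (int (2*k+2) * int ((2*m+1) choose (m+k+1))) = rat_of_int (int (m+k+2) * Gp k m 0)"
    using entry_int by simp
  hence "of_nat (2*k+2) * of_nat ((2*m+1) choose (m+k+1)) = (of_nat (m+k+2) :: rat) * of_int (Gp k m 0)"
    by simp
  moreover have "(of_nat (m+k+2) :: rat) \<noteq> 0" by (simp only: of_nat_eq_0_iff; simp)
  ultimately show ?thesis unfolding t by (simp add: field_simps)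
qed

theorem theorem19:
  fixes n k :: nat
  assumes "n \<ge> 1"
  shows "det (mat n n (\<lambda>(i, j). thm19_entry k i j)) =
    (if n mod (k + 1) = 0 then
       (-1) ^ ((n div (k + 1)) * ((k + 1) choose 2) + 1) * (of_nat (n div (k + 1)) - 1)
     else if n mod (k + 1) = 1 then
       (-1) ^ ((n div (k + 1)) * ((k + 1) choose 2) + k + 1) * of_nat (n div (k + 1))
     else 0)"
proof -
  have M: "mat n n (\<lambda>(i, j). thm19_entry k i j) = map_mat rat_of_int (Hm k n)"
  proof (rule eq_matI)
    fix i j assume i: "i < dim_row (map_mat rat_of_int (Hm k n))" and j: "j < dim_col (map_mat rat_of_int (Hm k n))"
    hence i: "i < n" and j: "j < n" by (auto simp: Hm_def)
    show "mat n n (\<lambda>(i, j). thm19_entry k i j) $$ (i,j) = map_mat rat_of_int (Hm k n) $$ (i,j)"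
    proof (cases "i + j = 0")
      case True thus ?thesis using i j by (simp add: Hm_def thm19_entry_def)
    next
      case False
      then obtain m where m: "i + j = Suc m" by (cases "i + j") auto
      show ?thesis using i j m entry_eq[OF m] by (simp add: Hm_def)
    qed
  qed (auto simp: Hm_def)
  have "det (mat n n (\<lambda>(i, j). thm19_entry k i j)) = rat_of_int (det (Hm k n))"
    unfolding M by (rule of_int_hom.hom_det)
  also have "\<dots> = (if n mod (k + 1) = 0 then
       (-1) ^ ((n div (k + 1)) * ((k + 1) choose 2) + 1) * (of_nat (n div (k + 1)) - 1)
     else if n mod (k + 1) = 1 then
       (-1) ^ ((n div (k + 1)) * ((k + 1) choose 2) + k + 1) * of_nat (n div (k + 1))
     else 0)"
    unfolding det_Hm[OF assms] by simp
  finally show ?thesis .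
qed


end
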